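(* Assume the standing setting and let $K\subset\Omega$ be compact. Then there exist positive constants $C_K$ and $T_K$ such that $$|\varphi(t,x)|\ge C_K\,|t|^{2/(m+2)}\qquad\text{for all }x\in K\text{ and all real }t\text{ with }|t|\ge T_K.$$
   Context: Let $Q$ be a complex polynomial of degree $m\ge 1$. A turning point is a zero of $Q$. For a turning point $a$, $\mathfrak S_a(x)=\int_a^x\sqrt{Q(\tau)}\,d\tau$. The Stokes curves emanating from a turning point $a$ are the arcs of $\{x:\operatorname{Im}\mathfrak S_a(x)=0\}$ starting at $a$; each ends at $\infty$ or at another turning point (a Stokes curve ending at a turning point $b$ is joined with the Stokes curves emanating from $b$). The Stokes curves divide $\mathbb C$ into regions called Stokes domains. Standing setting: $\Omega$ is a Stokes domain, $a\in\partial\Omega$ is a turning point, a holomorphic branch of $\sqrt Q$ on $\Omega$ is fixed so that $\mathfrak S_a$ is holomorphic on $\Omega$ with $\mathfrak S_a'=\sqrt Q$, and $\operatorname{Im}\mathfrak S_a(x)>0$ for all $x\in\Omega$. Moreover $\Omega$ is of one of two types: type (1): $\partial\Omega$ is a single connected curve containing $a$, and $\operatorname{Im}\mathfrak S_a=0$ on $\partial\Omega$; type (2): $\partial\Omega=\mathcal C_1\cup\mathcal C_2$ with $\mathcal C_1\cap\mathcal C_2=\emptyset$, there are turning points $a\in\mathcal C_1$, $b\in\mathcal C_2$, $\operatorname{Im}\mathfrak S_a=0$ on $\mathcal C_1$ and $\operatorname{Im}\mathfrak S_a=\operatorname{Im}\mathfrak S_a(b)$ on $\mathcal C_2$. For $x\in\Omega$,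 $\varphi(z,x)$ denotes the solution of $\frac{dy}{dz}=\frac{1}{\sqrt{Q(y)}}$, $y(0)=x$ (with the fixed branch); it satisfies $\mathfrak S_a(\varphi(z,x))=\mathfrak S_a(x)+z$, and for $x\in\Omega$ it exists for all real $z=t$. *)

theory Defs
  imports "HOL-Complex_Analysis.Complex_Analysis" "HOL-Computational_Algebra.Polynomial"
begin

definition turning_point :: "complex poly \<Rightarrow> complex \<Rightarrow> bool" where
  "turning_point Q a \<longleftrightarrow> poly Q a = 0"

text \<open>A point x lies on a Stokes curve (possibly a
  chain of Stokes curves joined at turning points) iff it can be reached from a
  turning point a by a C1 path gamma along which the primitive of sqrt(Q) stays
  real, i.e. Q(gamma t) * gamma'(t)^2 is a nonnegative real number for all t
  (so that Im of the integral of sqrt(Q) from a along gamma is identically 0).\<close>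
definition stokes_set :: "complex poly \<Rightarrow> complex set" where
  "stokes_set Q = {x. \<exists>a \<gamma>. turning_point Q a \<and>
      \<gamma> C1_differentiable_on {0..1} \<and> \<gamma> 0 = a \<and> \<gamma> 1 = x \<and>
      (\<forall>t\<in>{0..1::real}.
         let w = poly Q (\<gamma> t) * (vector_derivative \<gamma> (at t within {0..1}))\<^sup>2
         in Im w = 0 \<and> Re w \<ge> 0)}"

definition stokes_domain :: "complex poly \<Rightarrow> complex set \<Rightarrow> bool" where
  "stokes_domain Q \<Omega> \<longleftrightarrow> \<Omega> \<in> components (- stokes_set Q)"

definition is_flow :: "(complex \<Rightarrow> complex) \<Rightarrow> complex set \<Rightarrow> (real \<Rightarrow> complex \<Rightarrow> complex) \<Rightarrow> bool" where
  "is_flow sq \<Omega> \<phi> \<longleftrightarrow> (\<forall>x\<in>\<Omega>. \<phi> 0 x = x \<and>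
      (\<forall>t. \<phi> t x \<in> \<Omega> \<and> ((\<lambda>s. \<phi> s x) has_vector_derivative (1 / sq (\<phi> t x))) (at t)))"

end

theory Submission
  imports Defs
begin

lemma re_cnj_bound: "\<bar>Re (cnj a * b)\<bar> \<le> norm a * norm b"
  using abs_Re_le_cmod[of "cnj a * b"] by (simp only: norm_mult complex_mod_cnj)

lemma Z_growth:
  fixes y v :: "real \<Rightarrow> complex" and q :: "complex \<Rightarrow> complex" and c \<sigma> :: complex
  assumes c: "c \<noteq> 0" "\<sigma>^2 = 1/c"
    and R0: "R0 > 0" "\<And>z. norm z \<ge> R0 \<Longrightarrow> q z \<noteq> 0 \<and> norm (z^m / q z - 1/c) \<le> 1/(4*norm c)"
    and tt: "\<tau> \<le> t"
    and yd: "\<And>s. s \<in> {\<tau>..t} \<Longrightarrow> (y has_vector_derivative v s) (at s within {\<tau>..t})"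
    and vc: "continuous_on {\<tau>..t} v"
    and vq: "\<And>s. s \<in> {\<tau>..t} \<Longrightarrow> (v s)^2 * q (y s) = 1"
    and yR: "\<And>s. s \<in> {\<tau>..t} \<Longrightarrow> norm (y s) \<ge> R0"
  shows "norm (y t) powr ((real m + 2)/2) \<ge> ((real m + 2)/2) * (norm \<sigma>/2) * (t - \<tau>) - norm (y \<tau>) powr ((real m+2)/2)"
proof -
  define I where "I = {\<tau>..t}"
  define k where "k = (real m + 2)/2"
  have yc: "continuous_on I y"
    using yd unfolding I_def by (rule continuous_on_vector_derivative)
  have y0: "y s \<noteq> 0" if "s \<in> I" for s
    using yR[of s] R0(1) that unfolding I_def by auto
  define a where "a s = of_real k * v s / y s" for s
  have ac: "continuous_on I a"
    unfolding a_def using vc yc y0 unfolding I_def by (intro continuous_intros) auto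
  define A where "A s = integral {\<tau>..s} a" for s
  have Ad: "(A has_vector_derivative a s) (at s within I)" if "s \<in> I" for s
    unfolding A_def using integral_has_vector_derivative[OF ac[unfolded I_def] that[unfolded I_def]]
    unfolding I_def .
  have A0: "A \<tau> = 0" unfolding A_def by simp
  define Z0 where "Z0 = csqrt (y \<tau> ^ (m+2))"
  define Z where "Z s = Z0 * exp (A s)" for s
  define F where "F s = y s ^ (m+2) * exp (- 2 * A s)" for s
  have Fd: "(F has_vector_derivative 0) (at s within I)" if s: "s \<in> I" for s
  proof -
    have d1: "((\<lambda>s. y s ^ (m+2)) has_vector_derivative (v s * (of_nat (m+2) * y s ^ (m+1)))) (at s within I)"
    proof -
      have "((\<lambda>w. w^(m+2)) has_field_derivative (of_nat (m+2) * y s ^ (m+1))) (at (y s) within y ` I)"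
        by (rule has_field_derivative_at_within) (use DERIV_power[OF DERIV_ident, where n="m+2" and x="y s" and s=UNIV] in simp)
      from field_vector_diff_chain_within[OF yd[OF s[unfolded I_def]] this[unfolded I_def]]
      show ?thesis unfolding I_def o_def .
    qed
    have d2: "((\<lambda>s. exp (- 2 * A s)) has_vector_derivative ((- 2 * a s) * exp (- 2 * A s))) (at s within I)"
    proof -
      have "((\<lambda>s. - 2 * A s) has_vector_derivative (- 2 * a s)) (at s within I)"
        using has_vector_derivative_mult[OF has_vector_derivative_const[of "-2"] Ad[OF s]] by simp
      moreover have "(exp has_field_derivative exp (- 2 * A s)) (at (- 2 * A s) within (\<lambda>s. - 2 * A s) ` I)"
        by (rule has_field_derivative_at_within) (rule DERIV_exp)
      from field_vector_diff_chain_within[OF calculation this]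
      show ?thesis by (simp add: o_def mult.commute)
    qed
    have "(F has_vector_derivative (y s ^ (m+2) * ((- 2 * a s) * exp (- 2 * A s)) + (v s * (of_nat (m+2) * y s ^ (m+1))) * exp (- 2 * A s))) (at s within I)"
      unfolding F_def by (rule has_vector_derivative_mult[OF d1 d2])
    moreover have "y s ^ (m+2) * ((- 2 * a s) * exp (- 2 * A s)) + (v s * (of_nat (m+2) * y s ^ (m+1))) * exp (- 2 * A s) = 0"
    proof -
      have H1: "y s ^ (m+2) * a s = of_real k * v s * y s ^ (m+1)"
        unfolding a_def using y0[OF s] by (simp add: field_simps power_Suc)
      have H2: "2 * complex_of_real k = of_nat (m+2)" unfolding k_def by (simp add: field_simps)
      have "y s ^ (m+2) * ((- 2 * a s) * exp (- 2 * A s)) + (v s * (of_nat (m+2) * y s ^ (m+1))) * exp (- 2 * A s)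
          = - 2 * exp (- 2 * A s) * (y s ^ (m+2) * a s) + of_nat (m+2) * (v s * y s ^ (m+1) * exp (- 2 * A s))"
        by (simp add: algebra_simps)
      also have "\<dots> = (of_nat (m+2) - 2 * of_real k) * (v s * y s ^ (m+1) * exp (- 2 * A s))"
        unfolding H1 by (simp add: algebra_simps)
      also have "\<dots> = 0" using H2 by simp
      finally show ?thesis .
    qed
    ultimately show ?thesis by (metis (no_types, lifting))
  qed
  have Fc: "F s = y \<tau> ^ (m+2)" if "s \<in> I" for s
  proof -
    obtain C where "\<And>x. x \<in> I \<Longrightarrow> F x = C"
      using has_vector_derivative_zero_constant[of I F] Fd unfolding I_def by auto
    moreover have "\<tau> \<in> I" using tt unfolding I_def by auto
    ultimately show ?thesis using that by (metis A0 F_def exp_zero mult_1_right mult_zero_right)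
  qed
  have Z2: "Z s ^ 2 = y s ^ (m+2)" if s: "s \<in> I" for s
  proof -
    have "Z s ^ 2 = y \<tau> ^ (m+2) * exp (2 * A s)"
    proof -
      have e: "exp (A s) ^ 2 = exp (2 * A s)" by (simp only: power2_eq_square mult_2 exp_add)
      show ?thesis unfolding Z_def Z0_def power_mult_distrib power2_csqrt e ..
    qed
    also have "\<dots> = F s * exp (2 * A s)" using Fc[OF s] by simp
    also have "\<dots> = y s ^ (m+2) * exp (- 2 * A s + 2 * A s)" unfolding F_def by (simp only: exp_add mult.assoc)
    also have "\<dots> = y s ^ (m+2)" by simp
    finally show ?thesis .
  qed
  have tI: "t \<in> I" and tauI: "\<tau> \<in> I" using tt unfolding I_def by auto
  have normZ: "norm (Z s) = norm (y s) powr k" if s: "s \<in> I" for s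
  proof -
    have ny: "norm (y s) > 0" using y0[OF s] by simp
    have "norm (Z s) ^ 2 = norm (y s) ^ (m+2)" by (metis Z2[OF s] norm_power)
    also have "\<dots> = (norm (y s) powr k) ^ 2"
    proof -
      have "(norm (y s) powr k) ^ 2 = norm (y s) powr (of_nat 2 * k)"
        using ny by (intro powr_power) simp
      also have "of_nat 2 * k = real (m+2)" unfolding k_def by simp
      finally show ?thesis using powr_realpow[OF ny, of "m+2"] by simp
    qed
    finally show ?thesis by (rule power2_eq_imp_eq) auto
  qed
  define u where "u s = Z s * v s / y s" for s
  have Zd: "(Z has_vector_derivative (of_real k * u s)) (at s within I)" if s: "s \<in> I" for s
  proof -
    have "(exp has_field_derivative exp (A s)) (at (A s) within A ` I)"
      by (rule has_field_derivative_at_within) (rule DERIV_exp)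
    from field_vector_diff_chain_within[OF Ad[OF s] this]
    have "((\<lambda>s. exp (A s)) has_vector_derivative (a s * exp (A s))) (at s within I)"
      by (simp add: o_def)
    from has_vector_derivative_mult[OF has_vector_derivative_const[of Z0] this]
    have "(Z has_vector_derivative (Z0 * (a s * exp (A s)))) (at s within I)"
      unfolding Z_def[abs_def] by simp
    moreover have "Z0 * (a s * exp (A s)) = of_real k * u s"
      unfolding u_def a_def Z_def by (simp add: field_simps)
    ultimately show ?thesis by simp
  qed
  have Zc: "continuous_on I Z" using Zd by (rule continuous_on_vector_derivative)
  have uc: "continuous_on I u" unfolding u_def using Zc vc yc y0 unfolding I_def
    by (intro continuous_intros) auto
  have u2: "u s ^ 2 = y s ^ m / q (y s)" if s: "s \<in> I" for s
  proof -
    have "u s ^ 2 = Z s ^ 2 * v s ^ 2 / y s ^ 2" unfolding u_def by (simp add: power_divide power_mult_distrib)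
    also have "\<dots> = y s ^ m * (v s ^ 2 * q (y s)) / q (y s)"
      using Z2[OF s] y0[OF s] R0(2)[OF yR[OF s[unfolded I_def]]]
      by (simp add: field_simps power_add power2_eq_square)
    also have "\<dots> = y s ^ m / q (y s)" using vq[OF s[unfolded I_def]] by simp
    finally show ?thesis .
  qed
  define ns where "ns = norm \<sigma>"
  have ns2: "ns ^ 2 = 1 / norm c" unfolding ns_def by (metis c(2) norm_divide norm_one norm_power)
  have nspos: "ns > 0" using ns2 c(1) unfolding ns_def by (metis norm_eq_zero power_zero_numeral zero_less_norm_iff divide_eq_0_iff norm_one one_neq_zero)
  have near: "norm (u s ^ 2 - \<sigma> ^ 2) \<le> ns ^ 2 / 4" if s: "s \<in> I" for s
    using R0(2)[OF yR[OF s[unfolded I_def]]] u2[OF s] c(2) ns2 by simp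
  have disj: "norm (u s - \<sigma>) \<le> ns / 2 \<or> norm (u s + \<sigma>) \<le> ns / 2" if s: "s \<in> I" for s
  proof (rule ccontr)
    assume "\<not> ?thesis"
    then have "ns/2 * (ns/2) < norm (u s - \<sigma>) * norm (u s + \<sigma>)"
      using nspos by (intro mult_strict_mono) auto
    also have "\<dots> = norm (u s ^ 2 - \<sigma> ^ 2)"
      by (simp add: norm_mult[symmetric] power2_eq_square algebra_simps)
    finally show False using near[OF s] by (simp add: power2_eq_square)
  qed
  obtain \<sigma>' where s'1: "norm \<sigma>' = ns" and s'2: "\<And>s. s \<in> I \<Longrightarrow> norm (u s - \<sigma>') \<le> ns / 2 \<or> norm (u s + \<sigma>') \<le> ns / 2"
      and s'3: "norm (u \<tau> - \<sigma>') \<le> ns / 2"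
  proof (cases "norm (u \<tau> - \<sigma>) \<le> ns / 2")
    case True
    then show ?thesis using that[of \<sigma>] disj unfolding ns_def by blast
  next
    case False
    then have "norm (u \<tau> + \<sigma>) \<le> ns / 2" using disj[OF tauI] by blast
    then show ?thesis using that[of "-\<sigma>"] disj unfolding ns_def by (auto simp: add.commute)
  qed
  define g where "g s = Re (cnj \<sigma>' * u s)" for s
  have gbound: "g s \<ge> ns^2/2 \<or> g s \<le> - (ns^2/2)" if s: "s \<in> I" for s
  proof -
    have key: "\<bar>Re (cnj \<sigma>' * (u s - \<sigma>'))\<bar> \<le> ns * norm (u s - \<sigma>')"
      "\<bar>Re (cnj \<sigma>' * (u s + \<sigma>'))\<bar> \<le> ns * norm (u s + \<sigma>')"
      unfolding s'1[symmetric] by (rule re_cnj_bound)+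
    have sq: "Re (cnj \<sigma>' * \<sigma>') = ns ^ 2"
      using complex_norm_square[of \<sigma>'] s'1 by (metis Re_complex_of_real mult.commute)
    have e1: "g s = ns^2 + Re (cnj \<sigma>' * (u s - \<sigma>'))" unfolding g_def using sq by (simp add: algebra_simps)
    have e2: "g s = Re (cnj \<sigma>' * (u s + \<sigma>')) - ns^2" unfolding g_def using sq by (simp add: algebra_simps)
    from s'2[OF s] show ?thesis
    proof
      assume "norm (u s - \<sigma>') \<le> ns / 2"
      then have "ns * norm (u s - \<sigma>') \<le> ns * (ns/2)" using nspos by (intro mult_left_mono) auto
      moreover have "- (ns * norm (u s - \<sigma>')) \<le> Re (cnj \<sigma>' * (u s - \<sigma>'))" using key(1) unfolding abs_le_iff by linarith
      ultimately have "g s \<ge> ns^2/2" unfolding e1 power2_eq_square by linarith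
      then show ?thesis ..
    next
      assume "norm (u s + \<sigma>') \<le> ns / 2"
      then have "ns * norm (u s + \<sigma>') \<le> ns * (ns/2)" using nspos by (intro mult_left_mono) auto
      moreover have "Re (cnj \<sigma>' * (u s + \<sigma>')) \<le> ns * norm (u s + \<sigma>')" using key(2) unfolding abs_le_iff by linarith
      ultimately have "g s \<le> - (ns^2/2)" unfolding e2 power2_eq_square by linarith
      then show ?thesis ..
    qed
  qed
  have gc: "continuous_on I g" unfolding g_def using uc by (intro continuous_intros)
  have gpos: "g s \<ge> ns^2/2" if s: "s \<in> I" for s
  proof (rule ccontr)
    assume "\<not> ?thesis"
    then have gs: "g s \<le> - (ns^2/2)" using gbound[OF s] by auto
    have gt: "g \<tau> \<ge> ns^2/2"
    proof -
      have "ns * norm (u \<tau> - \<sigma>') \<le> ns * (ns/2)" using nspos s'3 by (intro mult_left_mono) auto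
      moreover have "\<bar>Re (cnj \<sigma>' * (u \<tau> - \<sigma>'))\<bar> \<le> ns * norm (u \<tau> - \<sigma>')"
        unfolding s'1[symmetric] by (rule re_cnj_bound)+
      moreover have "Re (cnj \<sigma>' * \<sigma>') = ns ^ 2"
        using complex_norm_square[of \<sigma>'] s'1 by (metis Re_complex_of_real mult.commute)
      moreover have "g \<tau> = Re (cnj \<sigma>' * \<sigma>') + Re (cnj \<sigma>' * (u \<tau> - \<sigma>'))" unfolding g_def by (simp add: algebra_simps)
      ultimately show ?thesis by (simp add: power2_eq_square)
    qed
    have sI: "\<tau> \<le> s" "{\<tau>..s} \<subseteq> I" using s unfolding I_def by auto
    have "continuous_on {\<tau>..s} (\<lambda>x. - g x)" using gc sI(2) by (intro continuous_intros) (rule continuous_on_subset)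
    then obtain r where r: "\<tau> \<le> r" "r \<le> s" "- g r = 0"
    proof -
      have "0 < ns^2/2" using nspos by simp
      then have "- g \<tau> \<le> 0" "0 \<le> - g s" using gs gt by linarith+
      from IVT'[of "\<lambda>x. - g x", OF this sI(1) \<open>continuous_on {\<tau>..s} (\<lambda>x. - g x)\<close>]
      show ?thesis using that by blast
    qed
    then have "r \<in> I" using sI by auto
    from gbound[OF this] r(3) mult_pos_pos[OF nspos nspos] show False by (auto simp: power2_eq_square)
  qed
  define h where "h s = Re (cnj \<sigma>' * Z s)" for s
  have hd: "(h has_derivative (\<lambda>d. d * (k * g s))) (at s within I)" if s: "s \<in> I" for s
  proof -
    have "((\<lambda>s. cnj \<sigma>' * Z s) has_vector_derivative (cnj \<sigma>' * (of_real k * u s))) (at s within I)"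
      using has_vector_derivative_mult[OF has_vector_derivative_const[of "cnj \<sigma>'"] Zd[OF s]] by simp
    then have "((\<lambda>s. cnj \<sigma>' * Z s) has_derivative (\<lambda>d. d *\<^sub>R (cnj \<sigma>' * (of_real k * u s)))) (at s within I)"
      by (simp add: has_vector_derivative_def)
    from bounded_linear.has_derivative[OF bounded_linear_Re this]
    have "(h has_derivative (\<lambda>d. Re (d *\<^sub>R (cnj \<sigma>' * (of_real k * u s))))) (at s within I)"
      unfolding h_def .
    moreover have "(\<lambda>d. Re (d *\<^sub>R (cnj \<sigma>' * (of_real k * u s)))) = (\<lambda>d. d * (k * g s))"
      unfolding g_def by (auto simp: scaleR_conv_of_real algebra_simps)
    ultimately show ?thesis by simp
  qed
  obtain \<xi> where \<xi>: "\<xi> \<in> I" "h t - h \<tau> = (t - \<tau>) * (k * g \<xi>)"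
    using mvt_very_simple[OF tt, of h "\<lambda>s d. d * (k * g s)"] hd unfolding I_def by auto
  have kpos: "k > 0" unfolding k_def by simp
  have "(t - \<tau>) * (k * (ns^2/2)) \<le> (t - \<tau>) * (k * g \<xi>)"
    using gpos[OF \<xi>(1)] tt kpos by (intro mult_left_mono) auto
  also have "\<dots> = h t - h \<tau>" using \<xi> by simp
  also have "\<dots> \<le> ns * (norm (Z t) + norm (Z \<tau>))"
  proof -
    have "\<bar>h t\<bar> \<le> ns * norm (Z t)" "\<bar>h \<tau>\<bar> \<le> ns * norm (Z \<tau>)"
      unfolding h_def s'1[symmetric] by (rule re_cnj_bound)+
    then show ?thesis by (simp add: algebra_simps)
  qed
  finally have "ns * (k * (ns/2) * (t - \<tau>)) \<le> ns * (norm (Z t) + norm (Z \<tau>))"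
    by (simp add: power2_eq_square algebra_simps)
  then have "k * (ns/2) * (t - \<tau>) \<le> norm (Z t) + norm (Z \<tau>)"
    using nspos by simp
  then show ?thesis unfolding normZ[OF tI] normZ[OF tauI] k_def ns_def by simp
qed

lemma poly_asym:
  fixes Q :: "complex poly"
  assumes "degree Q = m" "m \<ge> 1"
  shows "\<exists>R0>0. \<forall>z. norm z \<ge> R0 \<longrightarrow> poly Q z \<noteq> 0 \<and>
           norm (z^m / poly Q z - 1 / lead_coeff Q) \<le> 1 / (4 * norm (lead_coeff Q))"
proof -
  define c where "c = lead_coeff Q"
  have Q0: "Q \<noteq> 0" using assms by auto
  then have c0: "c \<noteq> 0" unfolding c_def by simp
  define B where "B = (\<Sum>i<m. norm (coeff Q i))"
  have B0: "B \<ge> 0" unfolding B_def by (intro sum_nonneg) auto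
  define R0 where "R0 = 1 + 8 * B / norm c"
  have R01: "R0 \<ge> 1" unfolding R0_def using B0 c0 by simp
  have main: "poly Q z \<noteq> 0 \<and> norm (z^m / poly Q z - 1 / c) \<le> 1 / (4 * norm c)" if z: "norm z \<ge> R0" for z
  proof -
    have z1: "norm z \<ge> 1" using z R01 by simp
    have zpos: "norm z > 0" using z1 by linarith
    have "poly Q z = (\<Sum>i<Suc m. coeff Q i * z ^ i)"
      unfolding poly_altdef assms(1) lessThan_Suc_atMost ..
    also have "\<dots> = (\<Sum>i<m. coeff Q i * z ^ i) + c * z ^ m"
      unfolding c_def using assms(1) by simp
    finally have pe: "poly Q z - c * z ^ m = (\<Sum>i<m. coeff Q i * z ^ i)" by simp
    have "norm (\<Sum>i<m. coeff Q i * z ^ i) \<le> (\<Sum>i<m. norm (coeff Q i) * norm z ^ (m - 1))"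
    proof -
      have "norm (\<Sum>i<m. coeff Q i * z ^ i) \<le> (\<Sum>i<m. norm (coeff Q i * z ^ i))" by (rule norm_sum)
      also have "\<dots> \<le> (\<Sum>i<m. norm (coeff Q i) * norm z ^ (m - 1))"
      proof (rule sum_mono)
        fix i assume "i \<in> {..<m}"
        then have "norm z ^ i \<le> norm z ^ (m - 1)" using z1 by (intro power_increasing) auto
        then show "norm (coeff Q i * z ^ i) \<le> norm (coeff Q i) * norm z ^ (m - 1)"
          by (simp add: norm_mult norm_power mult_left_mono)
      qed
      finally show ?thesis .
    qed
    also have "\<dots> = B * norm z ^ (m - 1)" unfolding B_def by (simp add: sum_distrib_right)
    finally have b1: "norm (poly Q z - c * z ^ m) \<le> B * norm z ^ (m - 1)" using pe by simp
    define w where "w = poly Q z / z ^ m"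
    have zm: "z ^ m \<noteq> 0" using zpos by auto
    have "norm (w - c) = norm (poly Q z - c * z ^ m) / norm z ^ m"
    proof -
      have "w - c = (poly Q z - c * z ^ m) / z ^ m" unfolding w_def using zm by (simp add: field_simps)
      then show ?thesis by (simp add: norm_divide norm_power)
    qed
    also have "\<dots> \<le> B * norm z ^ (m - 1) / norm z ^ m"
      using b1 zpos by (intro divide_right_mono) auto
    also have "\<dots> = B / norm z"
    proof -
      have "norm z ^ m = norm z * norm z ^ (m - 1)" using assms(2) by (cases m) auto
      then show ?thesis using zpos by simp
    qed
    also have "\<dots> \<le> norm c / 8"
    proof -
      have "8 * B / norm c \<le> norm z" using z unfolding R0_def by simp
      then have "8 * B \<le> norm z * norm c" using c0 by (simp add: field_simps)
      then show ?thesis using zpos c0 by (simp add: field_simps)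
    qed
    finally have wc: "norm (w - c) \<le> norm c / 8" .
    have "norm c \<le> norm w + norm (w - c)" using norm_triangle_sub[of c w] by (simp add: norm_minus_commute)
    then have wn: "norm w \<ge> 7 / 8 * norm c" using wc by linarith
    have ncp: "norm c > 0" using c0 by simp
    have w0: "w \<noteq> 0" using wn ncp by auto
    then have p0: "poly Q z \<noteq> 0" unfolding w_def by auto
    have "z^m / poly Q z = 1 / w" unfolding w_def by simp
    moreover have "1 / w - 1 / c = (c - w) / (w * c)"
      using w0 c0 by (simp add: divide_simps)
    ultimately have "z^m / poly Q z - 1 / c = (c - w) / (w * c)" by simp
    also have "norm \<dots> = norm (w - c) / (norm w * norm c)"
      by (simp add: norm_divide norm_mult norm_minus_commute)
    also have "\<dots> \<le> (norm c / 8) / (7 / 8 * norm c * norm c)"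
    proof (rule frac_le)
      show "0 \<le> norm c / 8" by simp
      show "norm (w - c) \<le> norm c / 8" by (rule wc)
      show "0 < 7 / 8 * norm c * norm c" using ncp by simp
      show "7 / 8 * norm c * norm c \<le> norm w * norm c" using wn ncp by (intro mult_right_mono) auto
    qed
    also have "(norm c / 8) / (7 / 8 * norm c * norm c) = 1 / (7 * norm c)" using ncp by (simp add: divide_simps)
    also have "1 / (7 * norm c) \<le> 1 / (4 * norm c)" using ncp by (intro divide_left_mono) auto
    finally show ?thesis using p0 by simp
  qed
  show ?thesis unfolding c_def[symmetric] using main R01 by (intro exI[of _ R0]) auto
qed

lemma orbit_bound:
  fixes y v :: "real \<Rightarrow> complex" and q :: "complex \<Rightarrow> complex" and c \<sigma> :: complex
  assumes c: "c \<noteq> 0" "\<sigma>^2 = 1/c"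
    and R0: "R0 > 0" "\<And>z. norm z \<ge> R0 \<Longrightarrow> q z \<noteq> 0 \<and> norm (z^m / q z - 1/c) \<le> 1/(4*norm c)"
    and yd: "\<And>s. (y has_vector_derivative v s) (at s)"
    and vc: "continuous_on UNIV v"
    and vq: "\<And>s. (v s)^2 * q (y s) = 1"
    and y0: "norm (y 0) \<le> R0"
    and T1: "\<And>s. s \<ge> 0 \<Longrightarrow> norm (y s) \<le> R0 \<Longrightarrow> s \<le> T1"
    and t: "t > T1"
  shows "norm (y t) powr ((real m + 2)/2) \<ge> ((real m + 2)/2) * (norm \<sigma>/2) * (t - T1) - R0 powr ((real m+2)/2)"
proof -
  have T10: "T1 \<ge> 0" using T1[of 0] y0 by simp
  have yc: "continuous_on UNIV y"
    by (rule continuous_on_vector_derivative) (use yd in \<open>auto intro: has_vector_derivative_at_within\<close>)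
  define P where "P = {0..t} \<inter> {s. norm (y s) \<le> R0}"
  have Pc: "closed P" unfolding P_def
    by (intro closed_Int closed_atLeastAtMost closed_Collect_le continuous_intros yc) 
  have P0: "0 \<in> P" unfolding P_def using y0 t T10 by auto
  have Pb: "bdd_above P" unfolding P_def by (rule bdd_aboveI[of _ t]) auto
  define \<tau> where "\<tau> = Sup P"
  have tauP: "\<tau> \<in> P" unfolding \<tau>_def using closed_contains_Sup[OF _ Pb Pc] P0 by auto
  have tau1: "\<tau> \<le> T1" using tauP T1 unfolding P_def by auto
  have tau0: "\<tau> \<ge> 0" using tauP unfolding P_def by auto
  have taut: "\<tau> < t" using tau1 t by simp
  have gt: "norm (y s) \<ge> R0" if "s \<in> {\<tau><..t}" for s
  proof (rule ccontr)
    assume "\<not> ?thesis"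
    then have "s \<in> P" using that tau0 unfolding P_def by auto
    then have "s \<le> \<tau>" unfolding \<tau>_def using Pb by (rule cSup_upper)
    then show False using that by simp
  qed
  have cl: "closed {s. R0 \<le> norm (y s)}"
    by (intro closed_Collect_le continuous_intros yc)
  have "closure {\<tau><..t} \<subseteq> {s. R0 \<le> norm (y s)}"
    using gt by (intro closure_minimal cl) auto
  then have yR: "\<And>s. s \<in> {\<tau>..t} \<Longrightarrow> norm (y s) \<ge> R0" using taut by auto
  have "((real m + 2)/2) * (norm \<sigma>/2) * (t - \<tau>) - norm (y \<tau>) powr ((real m+2)/2)
        \<le> norm (y t) powr ((real m + 2)/2)"
    by (rule Z_growth[OF c R0, of \<tau> t y v]) (use taut yd vc vq yR in \<open>auto intro: has_vector_derivative_at_within continuous_on_subset\<close>)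
  moreover have "norm (y \<tau>) powr ((real m+2)/2) \<le> R0 powr ((real m+2)/2)"
    using tauP unfolding P_def by (intro powr_mono2) auto
  moreover have "((real m + 2)/2) * (norm \<sigma>/2) * (t - T1) \<le> ((real m + 2)/2) * (norm \<sigma>/2) * (t - \<tau>)"
    using tau1 by (intro mult_left_mono) auto
  ultimately show ?thesis by linarith
qed

lemma final_ineq:
  fixes a c2 T1 Rk k t :: real
  assumes "c2 > 0" "T1 \<ge> 0" "t \<ge> 2*T1 + 2*Rk/c2 + 1" "Rk \<ge> 0" "a \<ge> 0"
    "a powr k \<ge> c2*(t - T1) - Rk" "k > 0"
  shows "a \<ge> (c2/2) powr (1/k) * t powr (1/k)"
proof -
  have "c2/2 * t \<ge> c2/2 * (2*T1 + 2*Rk/c2)" using assms(1,3) by (intro mult_left_mono) auto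
  also have "c2/2 * (2*T1 + 2*Rk/c2) = c2 * T1 + Rk" using assms(1) by (simp add: field_simps)
  finally have "c2/2 * t \<le> a powr k" using assms(6) by (simp add: algebra_simps)
  moreover have t0: "t \<ge> 0" using assms(1-4) by (smt (verit) divide_nonneg_pos)
  ultimately have "(c2/2 * t) powr (1/k) \<le> (a powr k) powr (1/k)"
    using assms(1,7) by (intro powr_mono2) auto
  also have "\<dots> = a" using assms(5,7) by (simp add: powr_powr powr_one)
  finally have X: "(c2/2 * t) powr (1/k) \<le> a" .
  have "(c2/2) powr (1/k) * t powr (1/k) = (c2/2 * t) powr (1/k)" by (rule powr_mult[symmetric])
  then show ?thesis using X by linarith
qed

theorem proposition4p1:
  fixes Q :: "complex poly" and m :: nat and \<Omega> K :: "complex set" and a :: complex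
    and sq S :: "complex \<Rightarrow> complex" and \<phi> :: "real \<Rightarrow> complex \<Rightarrow> complex"
  assumes deg: "degree Q = m" "m \<ge> 1"
    and dom: "stokes_domain Q \<Omega>"
    and a: "turning_point Q a" "a \<in> frontier \<Omega>"
    and branch: "sq holomorphic_on \<Omega>" "\<forall>x\<in>\<Omega>. (sq x)\<^sup>2 = poly Q x"
    and prim: "S holomorphic_on \<Omega>" "\<forall>x\<in>\<Omega>. (S has_field_derivative sq x) (at x)"
      "continuous_on (closure \<Omega>) S" "S a = 0"
    and pos: "\<forall>x\<in>\<Omega>. Im (S x) > 0"
    and types:
      "(connected (frontier \<Omega>) \<and> (\<forall>y\<in>frontier \<Omega>. Im (S y) = 0))
       \<or> (\<exists>C1 C2 b. frontier \<Omega> = C1 \<union> C2 \<and> C1 \<inter> C2 = {} \<and>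
            connected C1 \<and> connected C2 \<and> a \<in> C1 \<and> b \<in> C2 \<and> turning_point Q b \<and>
            (\<forall>y\<in>C1. Im (S y) = 0) \<and> (\<forall>y\<in>C2. Im (S y) = Im (S b)))"
    and flow: "is_flow sq \<Omega> \<phi>"
    and K: "compact K" "K \<subseteq> \<Omega>"
  shows "\<exists>C T. C > 0 \<and> T > 0 \<and>
           (\<forall>x\<in>K. \<forall>t::real. \<bar>t\<bar> \<ge> T \<longrightarrow>
              cmod (\<phi> t x) \<ge> C * \<bar>t\<bar> powr (2 / (real m + 2)))"
proof -
  have sub: "\<Omega> \<subseteq> - stokes_set Q" using dom unfolding stokes_domain_def by (rule in_components_subset)
  have Qnz: "poly Q x \<noteq> 0" if x: "x \<in> \<Omega>" for x
  proof
    assume q0: "poly Q x = 0"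
    have "x \<in> stokes_set Q" unfolding stokes_set_def turning_point_def
      by (rule CollectI, rule exI[of _ x], rule exI[of _ "\<lambda>_. x"]) (simp add: q0 Let_def)
    then show False using sub x by auto
  qed
  have sqnz: "sq x \<noteq> 0" if x: "x \<in> \<Omega>" for x
    using branch(2) Qnz[OF x] x by force
  have phiO: "\<phi> s x \<in> \<Omega>" if "x \<in> \<Omega>" for x s using flow that unfolding is_flow_def by blast
  have phid: "((\<lambda>s. \<phi> s x) has_vector_derivative 1 / sq (\<phi> s x)) (at s)" if "x \<in> \<Omega>" for x s
    using flow that unfolding is_flow_def by blast
  have phi0: "\<phi> 0 x = x" if "x \<in> \<Omega>" for x using flow that unfolding is_flow_def by blast
  have phic: "continuous_on UNIV (\<lambda>s. \<phi> s x)" if "x \<in> \<Omega>" for x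
    by (rule continuous_on_vector_derivative) (use phid[OF that] in \<open>auto intro: has_vector_derivative_at_within\<close>)
  have sqc: "continuous_on \<Omega> sq" using branch(1) by (rule holomorphic_on_imp_continuous_on)
  have Sphi: "S (\<phi> s x) = S x + of_real s" if x: "x \<in> \<Omega>" for x s
  proof -
    have d0: "((\<lambda>s. S (\<phi> s x) - of_real s) has_vector_derivative 0) (at r within UNIV)" for r
    proof -
      have "((S \<circ> (\<lambda>s. \<phi> s x)) has_vector_derivative (1 / sq (\<phi> r x)) * sq (\<phi> r x)) (at r)"
        by (rule field_vector_diff_chain_at[OF phid[OF x]]) (use prim(2) phiO[OF x] in auto)
      then have d1: "((\<lambda>s. S (\<phi> s x)) has_vector_derivative 1) (at r)"
        using sqnz[OF phiO[OF x]] by (simp add: o_def)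
      have d2: "((\<lambda>s. complex_of_real s) has_vector_derivative 1) (at r)"
        using has_vector_derivative_real_field[of "\<lambda>z. z" 1 r UNIV] DERIV_ident by auto
      show ?thesis using has_vector_derivative_diff[OF d1 d2] by simp
    qed
    obtain C where "\<And>s. s \<in> UNIV \<Longrightarrow> S (\<phi> s x) - of_real s = C"
      using has_vector_derivative_zero_constant[of UNIV, OF convex_UNIV d0] by blast
    then have e1: "S (\<phi> s x) - of_real s = C" and e2: "S (\<phi> 0 x) - of_real 0 = C" by blast+
    then have e: "S (\<phi> s x) - of_real s = S x" using phi0[OF x] by simp
    then show ?thesis by (simp add: diff_eq_eq)
  qed
  define c where "c = lead_coeff Q"
  have c0: "c \<noteq> 0" using deg unfolding c_def by auto
  define \<sigma> where "\<sigma> = csqrt (1 / c)"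
  have s2: "\<sigma>^2 = 1 / c" unfolding \<sigma>_def by simp
  have "\<sigma> \<noteq> 0"
  proof
    assume "\<sigma> = 0"
    then have "1 / c = 0" using s2 by simp
    then show False using c0 by simp
  qed
  then have nspos: "norm \<sigma> > 0" by simp
  obtain Ra where Ra: "Ra > 0" "\<And>z. norm z \<ge> Ra \<Longrightarrow> poly Q z \<noteq> 0 \<and> norm (z^m / poly Q z - 1/c) \<le> 1/(4*norm c)"
    using poly_asym[OF deg] unfolding c_def by blast
  obtain BK where BK: "\<And>x. x \<in> K \<Longrightarrow> norm x \<le> BK"
    using compact_imp_bounded[OF K(1)] unfolding Elementary_Metric_Spaces.bounded_iff by auto
  define R where "R = max Ra BK"
  have R1: "R > 0" using Ra(1) unfolding R_def by simp
  have R2: "poly Q z \<noteq> 0 \<and> norm (z^m / poly Q z - 1/c) \<le> 1/(4*norm c)" if "norm z \<ge> R" for z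
    using Ra(2)[of z] that unfolding R_def by simp
  note R = R1 R2
  have KR: "norm x \<le> R" if "x \<in> K" for x using BK[OF that] unfolding R_def by auto
  have Kcl: "K \<subseteq> closure \<Omega>" using K(2) closure_subset by blast
  have cpt: "compact (closure \<Omega> \<inter> cball 0 R)" by (rule closed_Int_compact) simp_all
  have "compact (S ` (closure \<Omega> \<inter> cball 0 R))"
    by (rule compact_continuous_image[OF continuous_on_subset[OF prim(3)] cpt]) auto
  then have "bounded (S ` (closure \<Omega> \<inter> cball 0 R))" by (rule compact_imp_bounded)
  then obtain M where M0: "\<forall>z\<in>S ` (closure \<Omega> \<inter> cball 0 R). norm z \<le> M"
    unfolding Elementary_Metric_Spaces.bounded_iff by (elim exE)
  have M: "norm (S y) \<le> M" if "y \<in> closure \<Omega> \<inter> cball 0 R" for y using M0 that by simp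
  have "compact (S ` K)"
    by (rule compact_continuous_image[OF continuous_on_subset[OF prim(3) Kcl] K(1)])
  then have "bounded (S ` K)" by (rule compact_imp_bounded)
  then obtain MK where MK0: "\<forall>z\<in>S ` K. norm z \<le> MK"
    unfolding Elementary_Metric_Spaces.bounded_iff by (elim exE)
  have MK: "norm (S y) \<le> MK" if "y \<in> K" for y using MK0 that by simp
  define T1 where "T1 = max 0 (M + MK)"
  have T1p: "\<bar>s\<bar> \<le> T1" if x: "x \<in> K" and n: "norm (\<phi> s x) \<le> R" for x s
  proof -
    have xO: "x \<in> \<Omega>" using x K(2) by auto
    have "\<phi> s x \<in> closure \<Omega> \<inter> cball 0 R" using phiO[OF xO] closure_subset n by auto
    then have "norm (S (\<phi> s x)) \<le> M" by (rule M)
    moreover have "norm (S x) \<le> MK" using MK[OF x] .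
    moreover have "\<bar>s\<bar> = norm (S (\<phi> s x) - S x)" using Sphi[OF xO, of s] by simp
    moreover have "norm (S (\<phi> s x) - S x) \<le> norm (S (\<phi> s x)) + norm (S x)" by (rule norm_triangle_ineq4)
    ultimately show ?thesis unfolding T1_def by linarith
  qed
  have T10: "T1 \<ge> 0"
    unfolding T1_def by simp
  define k where "k = (real m + 2) / 2"
  define c2 where "c2 = k * (norm \<sigma> / 2)"
  have kpos: "k > 0" unfolding k_def by simp
  have c2pos: "c2 > 0" unfolding c2_def using kpos nspos by simp
  define T where "T = 2*T1 + 2*(R powr k)/c2 + 1"
  define C where "C = (c2/2) powr (1/k)"
  have ek: "1 / k = 2 / (real m + 2)" unfolding k_def by simp
  have main: "cmod (\<phi> t x) \<ge> C * \<bar>t\<bar> powr (2 / (real m + 2))" if x: "x \<in> K" and t: "\<bar>t\<bar> \<ge> T" for x t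
  proof -
    have xO: "x \<in> \<Omega>" using x K(2) by auto
    have tT1: "\<bar>t\<bar> > T1" using t T10 c2pos unfolding T_def by (smt (verit) divide_nonneg_pos powr_ge_zero)
    have "norm (\<phi> t x) powr k \<ge> c2 * (\<bar>t\<bar> - T1) - R powr k"
    proof (cases "t \<ge> 0")
      case True
      have "norm ((\<lambda>s. \<phi> s x) \<bar>t\<bar>) powr ((real m + 2)/2) \<ge> ((real m + 2)/2) * (norm \<sigma>/2) * (\<bar>t\<bar> - T1) - R powr ((real m+2)/2)"
      proof (rule orbit_bound[OF c0 s2 R, where v = "\<lambda>s. 1 / sq (\<phi> s x)"])
        show "((\<lambda>s. \<phi> s x) has_vector_derivative 1 / sq (\<phi> s x)) (at s)" for s by (rule phid[OF xO])
        show "continuous_on UNIV (\<lambda>s. 1 / sq (\<phi> s x))"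
          using continuous_on_compose2[OF sqc phic[OF xO]] phiO[OF xO] sqnz[OF phiO[OF xO]]
          by (intro continuous_intros) auto
        show "(1 / sq (\<phi> s x))^2 * poly Q (\<phi> s x) = 1" for s
        proof -
          have e: "poly Q (\<phi> s x) = (sq (\<phi> s x))^2" using branch(2) phiO[OF xO] by auto
          show ?thesis unfolding e using sqnz[OF phiO[OF xO]] by (simp add: power_divide)
        qed
        show "norm (\<phi> 0 x) \<le> R" using phi0[OF xO] KR[OF x] by simp
        show "s \<le> T1" if "s \<ge> 0" "norm (\<phi> s x) \<le> R" for s using T1p[OF x that(2)] by simp
        show "\<bar>t\<bar> > T1" by (rule tT1)
      qed
      then show ?thesis using True unfolding k_def c2_def by (simp add: mult.assoc)
    next
      case False
      have "norm ((\<lambda>s. \<phi> (- s) x) \<bar>t\<bar>) powr ((real m + 2)/2) \<ge> ((real m + 2)/2) * (norm \<sigma>/2) * (\<bar>t\<bar> - T1) - R powr ((real m+2)/2)"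
      proof (rule orbit_bound[OF c0 s2 R, where v = "\<lambda>s. - (1 / sq (\<phi> (- s) x))"])
        show "((\<lambda>s. \<phi> (- s) x) has_vector_derivative - (1 / sq (\<phi> (- s) x))) (at s)" for s
        proof -
          have "(((\<lambda>s. \<phi> s x) \<circ> uminus) has_vector_derivative (-1) *\<^sub>R (1 / sq (\<phi> (- s) x))) (at s)"
            by (rule vector_diff_chain_at[OF _ phid[OF xO]]) (auto intro!: derivative_eq_intros)
          then show ?thesis by (simp add: o_def)
        qed
        have "continuous_on UNIV (\<lambda>s. \<phi> (- s) x)"
          by (rule continuous_on_compose2[OF phic[OF xO] continuous_on_minus[OF continuous_on_id]]) auto
        then show "continuous_on UNIV (\<lambda>s. - (1 / sq (\<phi> (- s) x)))"
          using continuous_on_compose2[OF sqc, of UNIV "\<lambda>s. \<phi> (- s) x"] phiO[OF xO] sqnz[OF phiO[OF xO]]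
          by (intro continuous_intros) auto
        show "(- (1 / sq (\<phi> (- s) x)))^2 * poly Q (\<phi> (- s) x) = 1" for s
        proof -
          have e: "poly Q (\<phi> (- s) x) = (sq (\<phi> (- s) x))^2" using branch(2) phiO[OF xO] by auto
          show ?thesis unfolding e using sqnz[OF phiO[OF xO]] by (simp add: power_divide)
        qed
        show "norm (\<phi> (- 0) x) \<le> R" using phi0[OF xO] KR[OF x] by simp
        show "s \<le> T1" if "s \<ge> 0" "norm (\<phi> (- s) x) \<le> R" for s using T1p[OF x that(2)] by simp
        show "\<bar>t\<bar> > T1" by (rule tT1)
      qed
      then show ?thesis using False unfolding k_def c2_def by (simp add: mult.assoc)
    qed
    then have "norm (\<phi> t x) \<ge> (c2/2) powr (1/k) * \<bar>t\<bar> powr (1/k)"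
      by (intro final_ineq[OF c2pos T10 _ powr_ge_zero]) (use t in \<open>auto simp: T_def kpos\<close>)
    then show ?thesis unfolding C_def ek .
  qed
  show ?thesis
  proof (intro exI conjI)
    show "C > 0" unfolding C_def using c2pos by simp
    show "T > 0" unfolding T_def using T10 c2pos by (smt (verit) divide_nonneg_pos powr_ge_zero)
    show "\<forall>x\<in>K. \<forall>t::real. \<bar>t\<bar> \<ge> T \<longrightarrow> C * \<bar>t\<bar> powr (2 / (real m + 2)) \<le> cmod (\<phi> t x)"
      using main by blast
  qed
qed

end
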